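(* Let $R$ be a ring such that whenever $a,b\in R$ satisfy $a+b=1$, there exist $r,s,e\in R$ with $1+ar\in eR$, $1+bs\in(1-e)R$ and $eR(1-e)\subseteq J(R)$. Then $R$ is feckly clean.
   Context: Rings are associative with identity, not necessarily commutative; $J(R)$ is the Jacobson radical. An element $u\in R$ is full if $RuR=R$. An element $a\in R$ is feckly clean if there exist $e\in R$ and a full element $u\in R$ with $a=e+u$ and $eR(1-e)\subseteq J(R)$; $R$ is feckly clean if every element is feckly clean. *)

theory Defs
  imports Main
begin

definition left_ideal :: "'a::ring_1 set \<Rightarrow> bool" where
  "left_ideal I \<longleftrightarrow> 0 \<in> I \<and> (\<forall>x\<in>I. \<forall>y\<in>I. x + y \<in> I) \<and> (\<forall>x\<in>I. - x \<in> I)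
      \<and> (\<forall>r x. x \<in> I \<longrightarrow> r * x \<in> I)"

definition maximal_left_ideal :: "'a::ring_1 set \<Rightarrow> bool" where
  "maximal_left_ideal M \<longleftrightarrow> left_ideal M \<and> M \<noteq> UNIV
      \<and> (\<forall>I. left_ideal I \<and> M \<subseteq> I \<and> I \<noteq> UNIV \<longrightarrow> I = M)"

definition jacobson :: "'a::ring_1 set" where
  "jacobson = \<Inter> {M. maximal_left_ideal M}"

text \<open>u is full if RuR = R, i.e. the two-sided ideal generated by u is R,
  i.e. 1 is a finite sum of elements r*u*s.\<close>
definition full :: "'a::ring_1 \<Rightarrow> bool" where
  "full u \<longleftrightarrow> (\<exists>n::nat. \<exists>r s :: nat \<Rightarrow> 'a. (\<Sum>i<n. r i * u * s i) = 1)"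

definition feckly_clean_elem :: "'a::ring_1 \<Rightarrow> bool" where
  "feckly_clean_elem a \<longleftrightarrow> (\<exists>e u. a = e + u \<and> full u
      \<and> (\<forall>r. e * r * (1 - e) \<in> jacobson))"

definition feckly_clean :: "'a::ring_1 itself \<Rightarrow> bool" where
  "feckly_clean _ \<longleftrightarrow> (\<forall>a::'a. feckly_clean_elem a)"

end

theory Submission
  imports Defs
begin

lemma jac_left: "z \<in> jacobson \<Longrightarrow> (r::'a::ring_1) * z \<in> jacobson"
  unfolding jacobson_def maximal_left_ideal_def left_ideal_def by auto
lemma li_0: "left_ideal I \<Longrightarrow> 0 \<in> I" unfolding left_ideal_def by blast
lemma li_add: "left_ideal I \<Longrightarrow> x \<in> I \<Longrightarrow> y \<in> I \<Longrightarrow> x + y \<in> I" unfolding left_ideal_def by blast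
lemma li_neg: "left_ideal I \<Longrightarrow> x \<in> I \<Longrightarrow> - x \<in> I" unfolding left_ideal_def by blast
lemma li_mult: "left_ideal I \<Longrightarrow> x \<in> I \<Longrightarrow> r * x \<in> I" unfolding left_ideal_def by blast
lemma li_I: "0 \<in> I \<Longrightarrow> (\<And>x y. x \<in> I \<Longrightarrow> y \<in> I \<Longrightarrow> x + y \<in> I) \<Longrightarrow> (\<And>x. x \<in> I \<Longrightarrow> - x \<in> I)
  \<Longrightarrow> (\<And>r x. x \<in> I \<Longrightarrow> r * x \<in> I) \<Longrightarrow> left_ideal I" unfolding left_ideal_def by blast
lemma li_one: "left_ideal (I::'a::ring_1 set) \<Longrightarrow> 1 \<in> I \<Longrightarrow> I = UNIV"
  using li_mult[of I 1] by auto

lemma exists_max: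
  fixes I :: "'a::ring_1 set"
  assumes I: "left_ideal I" and n1: "1 \<notin> I"
  shows "\<exists>M. maximal_left_ideal M \<and> I \<subseteq> M"
proof -
  let ?A = "{J. left_ideal J \<and> 1 \<notin> J \<and> I \<subseteq> J}"
  have "\<exists>M\<in>?A. \<forall>X\<in>?A. M \<subseteq> X \<longrightarrow> X = M"
  proof (rule Zorn_Lemma2, intro ballI)
    fix C assume C: "C \<in> chains ?A"
    show "\<exists>U\<in>?A. \<forall>X\<in>C. X \<subseteq> U"
    proof (cases "C = {}")
      case True then show ?thesis using I n1 by auto
    next
      case False
      have sub: "\<And>X. X \<in> C \<Longrightarrow> left_ideal X \<and> 1 \<notin> X \<and> I \<subseteq> X"
        using C unfolding chains_def by auto
      have ch: "\<And>X Y. X\<in>C \<Longrightarrow> Y\<in>C \<Longrightarrow> X \<subseteq> Y \<or> Y \<subseteq> X"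
        using C unfolding chains_def chain_subset_def by auto
      obtain X0 where X0: "X0 \<in> C" using False by auto
      have li: "left_ideal (\<Union>C)"
      proof (rule li_I)
        show "0 \<in> \<Union>C" using X0 sub li_0 by blast
      next
        fix x y assume "x \<in> \<Union>C" "y \<in> \<Union>C"
        then obtain X Y where X: "X \<in> C" "x \<in> X" and Y: "Y \<in> C" "y \<in> Y" by auto
        from ch[OF X(1) Y(1)] show "x + y \<in> \<Union>C"
        proof
          assume "X \<subseteq> Y" then have "x + y \<in> Y" using X Y sub li_add by blast
          then show ?thesis using Y by blast
        next
          assume "Y \<subseteq> X" then have "x + y \<in> X" using X Y sub li_add by blast
          then show ?thesis using X by blast
        qed
      next
        fix x assume "x \<in> \<Union>C"
        then obtain X where X: "X \<in> C" "x \<in> X" by auto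
        then have "- x \<in> X" using sub li_neg by blast
        then show "- x \<in> \<Union>C" using X by blast
      next
        fix r x assume "x \<in> \<Union>C"
        then obtain X where X: "X \<in> C" "x \<in> X" by auto
        then have "r * x \<in> X" using sub li_mult by blast
        then show "r * x \<in> \<Union>C" using X by blast
      qed
      have "1 \<notin> \<Union>C" using sub by blast
      moreover have "I \<subseteq> \<Union>C" using X0 sub by blast
      ultimately have "\<Union>C \<in> ?A" using li by simp
      then show ?thesis by blast
    qed
  qed
  then obtain M where MA: "M \<in> ?A" and mx: "\<forall>X\<in>?A. M \<subseteq> X \<longrightarrow> X = M" by (elim bexE)
  from MA have M: "left_ideal M" "1 \<notin> M" "I \<subseteq> M" by simp_all
  have nU: "M \<noteq> UNIV" using M(2) by blast
  have mm: "\<forall>J. left_ideal J \<and> M \<subseteq> J \<and> J \<noteq> UNIV \<longrightarrow> J = M"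
  proof (intro allI impI)
    fix J assume J: "left_ideal J \<and> M \<subseteq> J \<and> J \<noteq> UNIV"
    have "1 \<notin> J" using J li_one by blast
    then have "J \<in> ?A" using J M by auto
    then show "J = M" using mx J by blast
  qed
  have "maximal_left_ideal M" unfolding maximal_left_ideal_def using M(1) nU mm by (intro conjI)
  then show ?thesis using M(3) by blast
qed

lemma max_li: "maximal_left_ideal M \<Longrightarrow> left_ideal M" unfolding maximal_left_ideal_def by blast
lemma max_nU: "maximal_left_ideal M \<Longrightarrow> M \<noteq> UNIV" unfolding maximal_left_ideal_def by blast
lemma max_max: "maximal_left_ideal M \<Longrightarrow> left_ideal I \<Longrightarrow> M \<subseteq> I \<Longrightarrow> I \<noteq> UNIV \<Longrightarrow> I = M"
  unfolding maximal_left_ideal_def by blast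
lemma jacD: "z \<in> jacobson \<Longrightarrow> maximal_left_ideal M \<Longrightarrow> z \<in> M" unfolding jacobson_def by blast

lemma jac_inv:
  fixes z :: "'a::ring_1"
  assumes z: "z \<in> jacobson"
  shows "\<exists>v. v * (1 - z) = 1"
proof (rule ccontr)
  assume nv: "\<not> ?thesis"
  define I where "I = {p * (1 - z) | p. True}"
  have li: "left_ideal I"
  proof (rule li_I)
    show "0 \<in> I" unfolding I_def by (rule CollectI, rule exI[of _ 0]) simp
  next
    fix x y assume "x \<in> I" "y \<in> I"
    then obtain p q where "x = p * (1 - z)" "y = q * (1 - z)" unfolding I_def by auto
    then show "x + y \<in> I" unfolding I_def by (auto intro!: exI[of _ "p + q"] simp: distrib_right)
  next
    fix x assume "x \<in> I"
    then obtain p where "x = p * (1 - z)" unfolding I_def by auto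
    then show "- x \<in> I" unfolding I_def by (auto intro!: exI[of _ "- p"])
  next
    fix r x assume "x \<in> I"
    then obtain p where "x = p * (1 - z)" unfolding I_def by auto
    then show "r * x \<in> I" unfolding I_def by (auto intro!: exI[of _ "r * p"] simp: mult.assoc)
  qed
  have "1 \<notin> I" using nv unfolding I_def by auto
  then obtain M where M: "maximal_left_ideal M" "I \<subseteq> M" using exists_max[OF li] by blast
  have lM: "left_ideal M" using max_li[OF M(1)] .
  have "z \<in> M" using jacD[OF z M(1)] .
  moreover have "1 - z \<in> I" unfolding I_def by (rule CollectI, rule exI[of _ 1]) simp
  then have "1 - z \<in> M" using M(2) by blast
  ultimately have "(1 - z) + z \<in> M" using li_add[OF lM] by blast
  then have "M = UNIV" using li_one[OF lM] by simp
  then show False using max_nU[OF M(1)] by simp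
qed

lemma jac_right:
  fixes z w :: "'a::ring_1"
  assumes z: "z \<in> jacobson"
  shows "z * w \<in> jacobson"
  unfolding jacobson_def
proof (rule InterI)
  fix M :: "'a set" assume "M \<in> {M. maximal_left_ideal M}"
  then have M: "maximal_left_ideal M" by simp
  then have lM: "left_ideal M" by (rule max_li)
  show "z * w \<in> M"
  proof (rule ccontr)
    assume nm: "z * w \<notin> M"
    define I where "I = {m + r * (z * w) | m r. m \<in> M}"
    have li: "left_ideal I"
    proof (rule li_I)
      show "0 \<in> I" unfolding I_def using li_0[OF lM] by (intro CollectI exI[of _ 0]) simp
    next
      fix x y assume "x \<in> I" "y \<in> I"
      then obtain m1 r1 m2 r2 where h: "x = m1 + r1 * (z * w)" "y = m2 + r2 * (z * w)" "m1 \<in> M" "m2 \<in> M"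
        unfolding I_def by blast
      have "m1 + m2 \<in> M" using li_add[OF lM h(3,4)] .
      moreover have "x + y = (m1 + m2) + (r1 + r2) * (z * w)" using h by (simp add: algebra_simps)
      ultimately show "x + y \<in> I" unfolding I_def by blast
    next
      fix x assume "x \<in> I"
      then obtain m1 r1 where h: "x = m1 + r1 * (z * w)" "m1 \<in> M" unfolding I_def by blast
      have "- m1 \<in> M" using li_neg[OF lM h(2)] .
      moreover have "- x = (- m1) + (- r1) * (z * w)" using h by simp
      ultimately show "- x \<in> I" unfolding I_def by blast
    next
      fix r x assume "x \<in> I"
      then obtain m1 r1 where h: "x = m1 + r1 * (z * w)" "m1 \<in> M" unfolding I_def by blast
      have "r * m1 \<in> M" using li_mult[OF lM h(2)] .
      moreover have "r * x = (r * m1) + (r * r1) * (z * w)" using h by (simp add: algebra_simps)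
      ultimately show "r * x \<in> I" unfolding I_def by blast
    qed
    have "M \<subseteq> I"
    proof
      fix m assume "m \<in> M"
      moreover have "m = m + 0 * (z * w)" by simp
      ultimately show "m \<in> I" unfolding I_def by blast
    qed
    moreover have "z * w \<in> I"
    proof -
      have "z * w = 0 + 1 * (z * w)" by simp
      then show ?thesis unfolding I_def using li_0[OF lM] by blast
    qed
    ultimately have "I = UNIV" using max_max[OF M li] nm by blast
    then have "1 \<in> I" by simp
    then obtain m r where mr: "1 = m + r * (z * w)" "m \<in> M" unfolding I_def by blast
    have "w * (r * z) \<in> jacobson" using jac_left[OF jac_left[OF z]] .
    then obtain v where v: "v * (1 - w * (r * z)) = 1" using jac_inv by blast
    have m: "m = 1 - r * z * w" using mr(1) by (simp add: algebra_simps eq_diff_eq)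
    have "(1 + r * z * v * w) * (1 - r * z * w) = 1 - r*z*w + r*z*(v*(1 - w*(r*z)))*w"
      by (simp add: algebra_simps)
    also have "\<dots> = 1" using v by simp
    finally have inv: "(1 + r * z * v * w) * m = 1" using m by simp
    have "(1 + r * z * v * w) * m \<in> M" using li_mult[OF lM mr(2)] .
    then have "M = UNIV" using inv li_one[OF lM] by simp
    then show False using max_nU[OF M] by simp
  qed
qed

theorem corollary2p7:
  assumes "\<forall>a b :: 'a::ring_1. a + b = 1 \<longrightarrow>
     (\<exists>r s e. (\<exists>x. 1 + a * r = e * x) \<and> (\<exists>y. 1 + b * s = (1 - e) * y)
        \<and> (\<forall>t. e * t * (1 - e) \<in> jacobson))"
  shows "feckly_clean TYPE('a)"
  unfolding feckly_clean_def
proof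
  fix a :: 'a
  have "a + (1 - a) = 1" by simp
  then obtain r s e x y where hx: "1 + a * r = e * x" and hy: "1 + (1 - a) * s = (1 - e) * y"
    and J: "\<forall>t. e * t * (1 - e) \<in> jacobson"
    using assms by blast
  define u where "u = a - e"
  define z where "z = (e - e * e) * (x - r - s + y)"
  have "e * 1 * (1 - e) \<in> jacobson" using J by blast
  moreover have "e * 1 * (1 - e) = e - e * e" by (simp add: algebra_simps)
  ultimately have "z \<in> jacobson" unfolding z_def by (simp add: jac_right)
  then obtain v where v: "v * (1 - z) = 1" using jac_inv by blast
  have ar: "a * r = e * x - 1" using hx by (simp add: eq_diff_eq add.commute)
  have as: "a * s = s + 1 - (1 - e) * y" using hy by (simp add: algebra_simps eq_diff_eq)
  have e1: "(1 - e) * u * r = (1 - e) * (a * r) - (1 - e) * e * r"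
    unfolding u_def by (simp add: algebra_simps)
  have e2: "e * u * s = e * (a * s) - e * e * s"
    unfolding u_def by (simp add: algebra_simps)
  have key: "- ((1 - e) * u * r) + e * u * s = 1 - z"
    unfolding e1 e2 ar as z_def by (simp add: algebra_simps)
  have "(- (v * (1 - e))) * u * r + (v * e) * u * s = v * (- ((1 - e) * u * r) + e * u * s)"
    by (simp add: algebra_simps)
  also have "\<dots> = 1" using key v by simp
  finally have sum1: "(- (v * (1 - e))) * u * r + (v * e) * u * s = 1" .
  have "full u" unfolding full_def
  proof (intro exI)
    show "(\<Sum>i<(2::nat). (\<lambda>i::nat. if i = 0 then - (v * (1 - e)) else v * e) i * u * (\<lambda>i::nat. if i = 0 then r else s) i) = 1"
      using sum1 by (simp add: eval_nat_numeral)
  qed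
  moreover have "a = e + u" unfolding u_def by simp
  ultimately show "feckly_clean_elem a" unfolding feckly_clean_elem_def using J by blast
qed

end
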